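(* Let $T$ be an invertible operator in $\mathcal D(\mathcal P_n)$. Then $Z(Tf)\subset Z(f)+\Omega$ for every $f\in\mathcal P_n\setminus\{0\}$ and every circular domain $\Omega$ such that $Z(T\phi_k)\subset\Omega$ for all $k=1,\dots,n$.
   Context: Let $n\ge 1$ be an integer and $\mathcal P_n$ the complex vector space of polynomials in one complex variable of degree at most $n$; $\phi_k(z)=z^k/k!$. $D$ is differentiation on $\mathcal P_n$, $I$ the identity, and $\mathcal D(\mathcal P_n)$ the linear span of $I,D,\dots,D^n$. For a nonzero $f$, $Z(f)$ is the multiset of roots of $f$ (with multiplicity; empty for nonzero constants). For $A,B\subset\mathbb C$, $A+B=\{u+v:u\in A,v\in B\}$ (empty if $A$ is empty). A circular domain is an open or closed disk, the open or closed exterior of a disk, or an open or closed half-plane in $\mathbb C$. *)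

theory Defs
  imports "HOL-Analysis.Analysis" "HOL-Computational_Algebra.Polynomial"
begin

definition Pn :: "nat \<Rightarrow> complex poly set" where
  "Pn n = {f. degree f \<le> n}"

definition phi :: "nat \<Rightarrow> complex poly" where
  "phi k = monom (1 / of_nat (fact k)) k"

definition Dop :: "nat \<Rightarrow> (nat \<Rightarrow> complex) \<Rightarrow> complex poly \<Rightarrow> complex poly" where
  "Dop n a f = (\<Sum>j\<le>n. smult (a j) ((pderiv ^^ j) f))"

text \<open>Underlying set of the zero multiset Z(f).\<close>
definition Zs :: "complex poly \<Rightarrow> complex set" where
  "Zs f = {z. poly f z = 0}"

definition setsum_plus :: "complex set \<Rightarrow> complex set \<Rightarrow> complex set" where
  "setsum_plus A B = {u + v | u v. u \<in> A \<and> v \<in> B}"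

definition circular_domain :: "complex set \<Rightarrow> bool" where
  "circular_domain \<Omega> \<longleftrightarrow>
     (\<exists>c r. r > 0 \<and> (\<Omega> = ball c r \<or> \<Omega> = cball c r \<or>
                       \<Omega> = - cball c r \<or> \<Omega> = - ball c r)) \<or>
     (\<exists>a b. a \<noteq> 0 \<and> (\<Omega> = {z. Re (cnj a * z) > b} \<or> \<Omega> = {z. Re (cnj a * z) \<ge> b}))"

end

theory Submission
  imports Defs "HOL-Computational_Algebra.Fundamental_Theorem_Algebra"
begin


definition Qf :: "real \<Rightarrow> complex \<Rightarrow> real \<Rightarrow> complex \<Rightarrow> real" where
  "Qf al be ga z = al * cmod z ^ 2 + Re (be * z) + ga"

definition good :: "bool \<Rightarrow> real \<Rightarrow> bool" where
  "good s x = (if s then 0 < x else 0 \<le> x)"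

lemma good_nonneg: "good s x \<Longrightarrow> 0 \<le> x"
  by (auto simp: good_def split: if_splits)

lemma good_mono: "good s x \<Longrightarrow> x \<le> y \<Longrightarrow> good s y"
  by (auto simp: good_def split: if_splits)

lemma good_scale: "0 < t \<Longrightarrow> good s (x * t) = good s x"
  by (auto simp: good_def zero_less_mult_iff zero_le_mult_iff)

lemma not_good: "(\<not> good s x) = good (\<not> s) (- x)"
  by (auto simp: good_def)

lemma not_good_le: "\<not> good s x \<Longrightarrow> x \<le> 0"
  by (auto simp: good_def split: if_splits)

lemma normsq_diff: "cmod (a - b) ^ 2 = cmod a ^ 2 - 2 * Re (cnj a * b) + cmod b ^ 2"
  by (simp add: cmod_power2 algebra_simps power2_diff)

lemma Qf_inv:
  assumes "w \<noteq> 0"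
  shows "Qf al be ga (z0 - 1 / w) * cmod w ^ 2 =
     Qf al be ga z0 * cmod w ^ 2 + Re ((-2 * al * z0) * w) + Re ((- be) * cnj w) + al"
proof -
  obtain x y where w: "w = Complex x y" by (cases w)
  obtain a b where z: "z0 = Complex a b" by (cases z0)
  obtain c d where bb: "be = Complex c d" by (cases be)
  define N where "N = x*x + y*y"
  have "x^2 + y^2 \<noteq> 0" using assms w by (auto simp: complex_eq_iff)
  then have N0: "N \<noteq> 0" by (simp add: power2_eq_square N_def)
  have iw: "1 / w = Complex (x/N) (-y/N)" using w N0 by (simp add: complex_eq_iff Re_divide Im_divide N_def power2_eq_square)
  have cw: "cmod w ^ 2 = N" unfolding cmod_power2 using w by (simp add: N_def power2_eq_square)
  show ?thesis unfolding iw cw using z bb w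
    unfolding Qf_def cmod_power2
    apply (simp add: field_simps power2_eq_square N0)
    by (simp add: N_def algebra_simps)
qed

lemma Qf_reflect:
  "- Qf al be ga (zeta - z) = Qf (- al) (2 * of_real al * cnj zeta + be) (- Qf al be ga zeta) z"
  unfolding Qf_def normsq_diff by (simp add: algebra_simps)

lemma concave_avg:
  fixes p :: "nat \<Rightarrow> complex" and q k :: real
  assumes q: "q \<le> 0" and m: "m > 0"
  shows "q * cmod ((\<Sum>j<m. p j) / of_nat m) ^ 2 + Re (la * ((\<Sum>j<m. p j) / of_nat m))
           + Re (lb * cnj ((\<Sum>j<m. p j) / of_nat m)) + k
      \<ge> (\<Sum>j<m. q * cmod (p j) ^ 2 + Re (la * p j) + Re (lb * cnj (p j)) + k) / of_nat m"
proof -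
  have mr: "real m > 0" using m by simp
  have n1: "cmod (\<Sum>j<m. p j) \<le> (\<Sum>j<m. cmod (p j))" by (rule norm_sum)
  have n2: "(\<Sum>j<m. cmod (p j))^2 \<le> (\<Sum>j<m. cmod (p j)^2) * real m"
    using sum_squared_le_sum_of_squares[of "\<lambda>j. cmod (p j)" "{..<m}"] by simp
  have "cmod (\<Sum>j<m. p j) ^ 2 \<le> (\<Sum>j<m. cmod (p j))^2"
    using n1 by (simp add: power_mono)
  with n2 have n3: "cmod (\<Sum>j<m. p j) ^ 2 \<le> (\<Sum>j<m. cmod (p j)^2) * real m" by linarith
  have e1: "cmod ((\<Sum>j<m. p j) / of_nat m) ^ 2 = cmod (\<Sum>j<m. p j) ^ 2 / (real m)^2"
    by (simp add: norm_divide power_divide)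
  have "cmod ((\<Sum>j<m. p j) / of_nat m) ^ 2 \<le> (\<Sum>j<m. cmod (p j)^2) / real m"
    unfolding e1 using n3 mr by (simp add: field_simps power2_eq_square)
  then have A: "q * cmod ((\<Sum>j<m. p j) / of_nat m) ^ 2 \<ge> q * ((\<Sum>j<m. cmod (p j)^2) / real m)"
    using q mult_left_mono_neg by (metis times_divide_eq_right)
  have B: "Re (la * ((\<Sum>j<m. p j) / of_nat m)) = (\<Sum>j<m. Re (la * p j)) / real m"
    by (simp add: sum_distrib_left[symmetric] Re_divide_of_nat sum_subtractf flip: sum_divide_distrib)
  have C: "Re (lb * cnj ((\<Sum>j<m. p j) / of_nat m)) = (\<Sum>j<m. Re (lb * cnj (p j))) / real m"
    by (simp add: sum_distrib_left[symmetric] Re_divide_of_nat cnj_sum sum.distrib sum_negf flip: sum_divide_distrib)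
  have D: "(\<Sum>j<m. q * cmod (p j) ^ 2 + Re (la * p j) + Re (lb * cnj (p j)) + k) / of_nat m
     = q * ((\<Sum>j<m. cmod (p j)^2) / real m) + (\<Sum>j<m. Re (la * p j)) / real m
       + (\<Sum>j<m. Re (lb * cnj (p j))) / real m + k"
  proof -
    define A where "A = (\<lambda>j. q * cmod (p j) ^ 2)"
    define B where "B = (\<lambda>j. Re (la * p j))"
    define C where "C = (\<lambda>j. Re (lb * cnj (p j)))"
    have "(\<Sum>j<m. A j + B j + C j + k) = (\<Sum>j<m. A j) + (\<Sum>j<m. B j) + (\<Sum>j<m. C j) + real m * k"
      by (simp add: sum.distrib)
    moreover have "(\<Sum>j<m. A j) = q * (\<Sum>j<m. cmod (p j)^2)" by (simp add: A_def sum_distrib_left)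
    ultimately show ?thesis unfolding A_def B_def C_def using mr by (simp add: field_simps)
  qed
  show ?thesis unfolding B C D using A by linarith
qed

lemma good_avg:
  fixes x :: "nat \<Rightarrow> real"
  assumes "0 < k" "k \<le> m" "\<forall>j<m. 0 \<le> x j" "\<forall>j<k. good s (x j)"
  shows "good s ((\<Sum>j<m. x j) / real m)"
proof -
  have m: "real m > 0" using assms by simp
  have s0: "0 \<le> (\<Sum>j<m. x j)" using assms(3) by (intro sum_nonneg) auto
  have "x 0 \<le> (\<Sum>j<m. x j)" using assms by (intro member_le_sum) auto
  moreover have "good s (x 0)" using assms by auto
  ultimately have "good s (\<Sum>j<m. x j)" using good_mono by blast
  then show ?thesis using m by (auto simp: good_def)
qed



definition pd :: "nat \<Rightarrow> complex \<Rightarrow> complex poly \<Rightarrow> complex poly" where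
  "pd m c f = smult (of_nat m) f + [:c, -1:] * pderiv f"

definition pair :: "nat \<Rightarrow> complex poly \<Rightarrow> complex poly \<Rightarrow> complex \<Rightarrow> complex" where
  "pair m h f zeta = (\<Sum>j\<le>m. coeff h j * fact j * poly ((pderiv ^^ (m - j)) f) zeta)"

primrec itr :: "complex \<Rightarrow> (nat \<Rightarrow> complex) \<Rightarrow> nat \<Rightarrow> complex poly \<Rightarrow> complex poly" where
  "itr zeta r 0 f = f"
| "itr zeta r (Suc m) f = itr zeta r m (pd (Suc m) (zeta - r m) f)"

lemma poly_pd: "poly (pd m c f) z = of_nat m * poly f z + (c - z) * poly (pderiv f) z"
  by (simp add: pd_def algebra_simps)

lemma coeff_lin_mult: "coeff ([:c, -1:] * g) i = (c::complex) * coeff g i - (if i = 0 then 0 else coeff g (i - 1))"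
  by (cases i) (simp_all add: coeff_pCons)

lemma coeff_pd: "coeff (pd m c f) i =
   of_nat m * coeff f i + c * of_nat (Suc i) * coeff f (Suc i) - of_nat i * coeff f i"
  by (cases i) (simp_all add: pd_def coeff_lin_mult coeff_pderiv algebra_simps)

lemma degree_pd: "degree f \<le> m \<Longrightarrow> degree (pd m c f) \<le> m - 1"
proof (intro degree_le allI impI)
  fix i assume d: "degree f \<le> m" and i: "m - 1 < i"
  have "coeff f (Suc i) = 0" using d i by (intro coeff_eq_0) auto
  moreover have "of_nat m * coeff f i - of_nat i * coeff f i = 0"
  proof (cases "i = m")
    case False
    then have "coeff f i = 0" using d i by (intro coeff_eq_0) auto
    then show ?thesis by simp
  qed simp
  ultimately show "coeff (pd m c f) i = 0" by (simp add: coeff_pd)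
qed

lemma pderiv_funpow_0: "(pderiv ^^ j) 0 = (0 :: complex poly)"
  by (induction j) (simp_all add: pderiv_0)

lemma degree_pderiv_funpow: "degree ((pderiv ^^ j) (f :: complex poly)) = degree f - j"
  by (induction j) (simp_all add: degree_pderiv)

lemma pderiv_funpow_high: "degree (f :: complex poly) < j \<Longrightarrow> (pderiv ^^ j) f = 0"
proof -
  assume a: "degree f < j"
  then obtain i where j: "j = Suc i" by (cases j) auto
  have "degree ((pderiv ^^ i) f) = 0" using a j by (simp add: degree_pderiv_funpow)
  then show ?thesis using j by (simp add: pderiv_eq_0_iff)
qed

lemma pderiv_funpow_pd: "(pderiv ^^ k) (pd m c f) =
   smult (of_nat m - of_nat k) ((pderiv ^^ k) f) + [:c, -1:] * (pderiv ^^ (Suc k)) f"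
proof (induction k)
  case 0
  then show ?case by (simp add: pd_def)
next
  case (Suc k)
  have "(pderiv ^^ Suc k) (pd m c f) = pderiv ((pderiv ^^ k) (pd m c f))" by simp
  also have "\<dots> = smult (of_nat m - of_nat k) ((pderiv ^^ Suc k) f)
     + ([:c, -1:] * (pderiv ^^ Suc (Suc k)) f + [:-1:] * (pderiv ^^ Suc k) f)"
    unfolding Suc by (simp add: pderiv_add pderiv_smult pderiv_mult pderiv_minus pderiv_pCons algebra_simps)
  also have "\<dots> = smult (of_nat m - of_nat (Suc k)) ((pderiv ^^ Suc k) f) + [:c, -1:] * (pderiv ^^ Suc (Suc k)) f"
    by (simp add: algebra_simps smult_diff_left smult_add_left)
  finally show ?case .
qed

lemma poly_pderiv_funpow_pd: "poly ((pderiv ^^ k) (pd m c f)) z =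
   (of_nat m - of_nat k) * poly ((pderiv ^^ k) f) z + (c - z) * poly ((pderiv ^^ (Suc k)) f) z"
  unfolding pderiv_funpow_pd by (simp add: algebra_simps)

lemma pair_smult: "pair m (smult A h) f z = A * pair m h f z"
  by (simp add: pair_def sum_distrib_left algebra_simps)

lemma pair_step:
  assumes dh: "degree h \<le> m"
  shows "pair (Suc m) ([:-w, 1:] * h) f zeta = pair m h (pd (Suc m) (zeta - w) f) zeta"
proof -
  define F where "F = (\<lambda>k. poly ((pderiv ^^ k) f) zeta)"
  have c: "coeff ([:-w, 1:] * h) j = - w * coeff h j + (if j = 0 then 0 else coeff h (j - 1))" for j
    by (cases j) (simp_all add: coeff_pCons)
  have hm: "coeff h (Suc m) = 0" using dh by (intro coeff_eq_0) auto
  have "pair (Suc m) ([:-w, 1:] * h) f zeta =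
      (\<Sum>j\<le>Suc m. - w * coeff h j * fact j * F (Suc m - j)) +
      (\<Sum>j\<le>Suc m. (if j = 0 then 0 else coeff h (j - 1)) * fact j * F (Suc m - j))"
    unfolding pair_def c F_def sum.distrib[symmetric] by (intro sum.cong) (simp_all add: algebra_simps)
  also have "(\<Sum>j\<le>Suc m. - w * coeff h j * fact j * F (Suc m - j)) =
      (\<Sum>j\<le>m. - w * coeff h j * fact j * F (Suc m - j))"
    using hm by simp
  also have "(\<Sum>j\<le>Suc m. (if j = 0 then 0 else coeff h (j - 1)) * fact j * F (Suc m - j)) =
      (\<Sum>j\<le>m. coeff h j * fact (Suc j) * F (m - j))"
    by (subst sum.atMost_Suc_shift) simp
  also have "(\<Sum>j\<le>m. - w * coeff h j * fact j * F (Suc m - j)) + (\<Sum>j\<le>m. coeff h j * fact (Suc j) * F (m - j))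
     = (\<Sum>j\<le>m. coeff h j * fact j * ((of_nat (Suc m) - of_nat (m - j)) * F (m - j) + (zeta - w - zeta) * F (Suc (m - j))))"
    unfolding sum.distrib[symmetric]
  proof (intro sum.cong refl)
    fix j assume j: "j \<in> {..m}"
    then have e1: "(of_nat (Suc m) - of_nat (m - j) :: complex) = of_nat (Suc j)"
      by (simp add: of_nat_diff)
    have e2: "Suc (m - j) = Suc m - j" using j by simp
    show "- w * coeff h j * fact j * F (Suc m - j) + coeff h j * fact (Suc j) * F (m - j) =
        coeff h j * fact j * ((of_nat (Suc m) - of_nat (m - j)) * F (m - j) + (zeta - w - zeta) * F (Suc (m - j)))"
      unfolding e1 e2 by (simp add: algebra_simps)
  qed
  also have "\<dots> = pair m h (pd (Suc m) (zeta - w) f) zeta"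
    unfolding pair_def poly_pderiv_funpow_pd F_def by simp
  finally show ?thesis .
qed

lemma degree_linprod: "degree (\<Prod>i<m. [:- r i, 1 :: complex:]) = m"
  by (subst degree_prod_sum_eq) auto

lemma pair_prod:
  "degree f \<le> m \<Longrightarrow> pair m (\<Prod>i<m. [:- r i, 1:]) f zeta = poly (itr zeta r m f) zeta"
proof (induction m arbitrary: f)
  case 0
  then show ?case by (simp add: pair_def)
next
  case (Suc m)
  define P where "P = (\<Prod>i<m. [:- r i, 1:])"
  have dP: "degree P \<le> m" unfolding P_def by (simp add: degree_linprod)
  have e: "(\<Prod>i<Suc m. [:- r i, 1:]) = [:- r m, 1:] * P"
    unfolding P_def by (simp only: prod.lessThan_Suc mult.commute)
  have "pair (Suc m) (\<Prod>i<Suc m. [:- r i, 1:]) f zeta = pair m P (pd (Suc m) (zeta - r m) f) zeta"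
    unfolding e by (rule pair_step[OF dP])
  also have "\<dots> = poly (itr zeta r m (pd (Suc m) (zeta - r m) f)) zeta"
    unfolding P_def using Suc.IH degree_pd[OF Suc.prems, of "zeta - r m"] by simp
  finally show ?case by (simp only: itr.simps)
qed

lemma logderiv:
  fixes z :: "nat \<Rightarrow> complex" and k :: nat
  assumes "\<forall>i<k. x \<noteq> z i"
  shows "poly (pderiv (\<Prod>i<k. [:- z i, 1:])) x = poly (\<Prod>i<k. [:- z i, 1:]) x * (\<Sum>i<k. 1 / (x - z i))"
  using assms
proof (induction k)
  case 0
  then show ?case by simp
next
  case (Suc k)
  define P where "P = (\<Prod>i<k. [:- z i, 1:])"
  have ne: "x - z k \<noteq> 0" using Suc.prems by auto
  have IH: "poly (pderiv P) x = poly P x * (\<Sum>i<k. 1 / (x - z i))" using Suc by (simp add: P_def)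
  have e: "(\<Prod>i<Suc k. [:- z i, 1:]) = [:- z k, 1:] * P"
    by (simp add: mult.commute P_def)
  have "poly (pderiv ([:- z k, 1:] * P)) x = (x - z k) * poly (pderiv P) x + poly P x"
  proof -
    have d1: "pderiv [:- z k, 1:] = 1" by (simp add: pderiv_pCons)
    show ?thesis unfolding pderiv_mult d1 by (simp del: mult_pCons_left add: algebra_simps)
  qed
  moreover have "poly ([:- z k, 1:] * P) x = (x - z k) * poly P x"
    by (simp del: mult_pCons_left)
  ultimately show ?case unfolding e using IH ne
    by (simp only: sum.lessThan_Suc) (simp del: mult_pCons_left add: field_simps)
qed

lemma vieta:
  fixes z :: "nat \<Rightarrow> complex"
  shows "coeff (\<Prod>i<Suc k. [:- z i, 1:]) k = - (\<Sum>i<Suc k. z i)"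
proof (induction k)
  case 0
  then show ?case by simp
next
  case (Suc k)
  define P where "P = (\<Prod>i<Suc k. [:- z i, 1:])"
  have dP: "degree P = Suc k" unfolding P_def by (rule degree_linprod)
  have "lead_coeff P = 1" unfolding P_def lead_coeff_prod by simp
  then have l: "coeff P (Suc k) = 1" using dP by simp
  have e: "(\<Prod>i<Suc (Suc k). [:- z i, 1:]) = [:- z (Suc k), 1:] * P"
    by (simp add: mult.commute P_def)
  have c: "coeff ([:- z (Suc k), 1:] * P) (Suc k) = - z (Suc k) * coeff P (Suc k) + coeff P k"
    by (simp add: coeff_pCons)
  have IH: "coeff P k = - (\<Sum>i<Suc k. z i)" using Suc by (simp add: P_def)
  show ?case unfolding e c IH l by (simp only: sum.lessThan_Suc[of _ "Suc k"]) simp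
qed



lemma laguerre:
  fixes f :: "complex poly"
  assumes m: "m \<ge> 1" and f0: "f \<noteq> 0" and df: "degree f \<le> m"
    and rt: "\<forall>z. poly f z = 0 \<longrightarrow> good s (Qf al be ga z)"
    and c: "\<not> good s (Qf al be ga c)"
    and cond: "al \<ge> 0 \<or> degree f = m"
  shows "pd m c f \<noteq> 0 \<and> (\<forall>z. poly (pd m c f) z = 0 \<longrightarrow> good s (Qf al be ga z))
     \<and> degree (pd m c f) \<le> m - 1 \<and> (al \<ge> 0 \<or> degree (pd m c f) = m - 1)"
proof -
  let ?Q = "Qf al be ga"
  obtain z where fd: "smult (lead_coeff f) (\<Prod>i<degree f. [:-z i, 1:]) = f"
    using complex_poly_decompose' by blast
  define k where "k = degree f"
  define A where "A = lead_coeff f"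
  define P where "P = (\<Prod>i<k. [:-z i, 1:])"
  have fP: "f = smult A P" using fd by (simp add: A_def P_def k_def)
  have A0: "A \<noteq> 0" using f0 by (simp add: A_def)
  have km: "k \<le> m" using df by (simp add: k_def)
  have zroot: "poly f (z i) = 0" if "i < k" for i
    using that unfolding fP P_def by (auto simp: poly_prod)
  have zK: "good s (?Q (z i))" if "i < k" for i using zroot[OF that] rt by blast
  have fc: "poly f c \<noteq> 0" using rt c by blast
  have pdc: "poly (pd m c f) c \<noteq> 0" using fc m by (simp add: poly_pd)
  have nz: "pd m c f \<noteq> 0" using pdc by auto
  have roots: "good s (?Q z0)" if r: "poly (pd m c f) z0 = 0" for z0
  proof (rule ccontr)
    assume ng: "\<not> good s (?Q z0)"
    have zc: "z0 \<noteq> c" using r pdc by auto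
    have f0z: "poly f z0 \<noteq> 0" using ng rt by blast
    have zz: "\<forall>i<k. z0 \<noteq> z i" using zK ng by blast
    define S where "S = (\<Sum>i<k. 1 / (z0 - z i))"
    have "poly (pderiv f) z0 = A * (poly P z0 * S)"
      unfolding fP pderiv_smult S_def P_def using logderiv[OF zz] by simp
    also have "\<dots> = poly f z0 * S" unfolding fP by simp
    finally have pdf: "poly (pderiv f) z0 = poly f z0 * S" .
    have "poly f z0 * (of_nat m + (c - z0) * S) = 0"
      using r unfolding poly_pd pdf by (simp add: algebra_simps)
    then have eq: "of_nat m + (c - z0) * S = 0" using f0z by simp
    have k1: "k \<ge> 1"
    proof (rule ccontr)
      assume "\<not> k \<ge> 1"
      then have "k = 0" by simp
      then have "S = 0" by (simp add: S_def)
      then show False using eq m by simp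
    qed
    define p where "p = (\<lambda>j. if j < k then 1 / (z0 - z j) else 0)"
    have sp: "(\<Sum>j<m. p j) = S"
    proof -
      have "(\<Sum>j<m. p j) = (\<Sum>j<k. p j)"
        using km by (intro sum.mono_neutral_right) (auto simp: p_def)
      also have "\<dots> = S" unfolding S_def p_def by simp
      finally show ?thesis .
    qed
    define v where "v = (\<Sum>j<m. p j) / of_nat m"
    have mc: "(of_nat m :: complex) \<noteq> 0" using m by simp
    have v: "v = 1 / (z0 - c)"
    proof -
      have "S = of_nat m / (z0 - c)" using eq zc by (simp add: field_simps)
      then show ?thesis unfolding v_def sp using mc zc by (simp add: divide_simps)
    qed
    have v0: "v \<noteq> 0" using v zc by simp
    define F where "F = (\<lambda>w. ?Q z0 * cmod w ^ 2 + Re ((-2 * of_real al * z0) * w) + Re ((- be) * cnj w) + al)"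
    have FQ: "F w = ?Q (z0 - 1 / w) * cmod w ^ 2" if "w \<noteq> 0" for w
      unfolding F_def using Qf_inv[OF that] by simp
    have q0: "?Q z0 \<le> 0" using ng by (rule not_good_le)
    have conc: "F v \<ge> (\<Sum>j<m. F (p j)) / of_nat m"
      unfolding F_def v_def using concave_avg[where p=p and m=m and la="-2 * of_real al * z0" and lb="- be" and k=al, OF q0] m by simp
    have Fp: "good s (F (p j))" if "j < k" for j
    proof -
      have pj: "p j \<noteq> 0" "z0 - 1 / p j = z j" using that zz by (auto simp: p_def)
      have "F (p j) = ?Q (z j) * cmod (p j) ^ 2" using FQ[OF pj(1)] pj(2) by simp
      then show ?thesis using good_scale[of "cmod (p j) ^ 2" s] zK[OF that] pj(1) by simp
    qed
    have Fp0: "0 \<le> F (p j)" if "j < m" for j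
    proof (cases "j < k")
      case True
      then show ?thesis using Fp good_nonneg by blast
    next
      case False
      then have "k < m" using that by simp
      then have "al \<ge> 0" using cond by (simp add: k_def)
      then show ?thesis using False by (simp add: F_def p_def)
    qed
    have "good s ((\<Sum>j<m. F (p j)) / real m)"
      using good_avg[of k m "\<lambda>j. F (p j)" s] k1 km Fp0 Fp by simp
    then have "good s (F v)" using conc good_mono by simp
    moreover have "F v = ?Q c * cmod v ^ 2" using FQ[OF v0] v by simp
    ultimately have "good s (?Q c)" using good_scale[of "cmod v ^ 2" s] v0 by simp
    then show False using c by simp
  qed
  have dg: "degree (pd m c f) \<le> m - 1" using degree_pd[OF df] .
  have cond2: "al \<ge> 0 \<or> degree (pd m c f) = m - 1"
  proof (cases "al \<ge> 0")
    case False
    then have al: "al \<le> 0" by simp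
    have kmm: "k = m" using cond False by (simp add: k_def)
    obtain m' where m': "m = Suc m'" using m by (cases m) auto
    have fm: "coeff f m = A" using kmm by (simp add: A_def k_def)
    have fm': "coeff f m' = - A * (\<Sum>i<m. z i)"
      unfolding fP P_def kmm m' coeff_smult vieta[where k=m' and z=z] by (simp only: mult_minus_left mult_minus_right)
    have cf: "coeff (pd m c f) m' = A * (of_nat m * c - (\<Sum>i<m. z i))"
      unfolding coeff_pd fm' using fm m' by (simp add: algebra_simps of_nat_Suc)
    have "coeff (pd m c f) m' \<noteq> 0"
    proof
      assume "coeff (pd m c f) m' = 0"
      then have "of_nat m * c = (\<Sum>i<m. z i)" using A0 cf by simp
      then have cs: "c = (\<Sum>i<m. z i) / of_nat m" using m by (simp add: field_simps)
      have "?Q ((\<Sum>i<m. z i) / of_nat m) \<ge> (\<Sum>j<m. ?Q (z j)) / of_nat m"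
        using concave_avg[where p=z and m=m and la=be and lb=0 and k=ga, OF al] m by (simp add: Qf_def)
      moreover have "good s ((\<Sum>j<m. ?Q (z j)) / real m)"
        using good_avg[of m m "\<lambda>j. ?Q (z j)" s] zK kmm m good_nonneg by auto
      ultimately have "good s (?Q c)" unfolding cs using good_mono by blast
      then show False using c by simp
    qed
    then have "m' \<le> degree (pd m c f)" by (rule le_degree)
    then show ?thesis using dg m' by simp
  qed simp
  show ?thesis using nz roots dg cond2 by blast
qed

lemma laguerre_iter:
  "f \<noteq> 0 \<Longrightarrow> degree f \<le> m \<Longrightarrow> (\<forall>z. poly f z = 0 \<longrightarrow> good s (Qf al be ga z))
   \<Longrightarrow> (\<forall>i<m. \<not> good s (Qf al be ga (zeta - r i))) \<Longrightarrow> (al \<ge> 0 \<or> degree f = m)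
   \<Longrightarrow> poly (itr zeta r m f) zeta \<noteq> 0"
proof (induction m arbitrary: f)
  case 0
  then have "degree f = 0" by simp
  then have "f = [:coeff f 0:]" using degree_0_id by metis
  moreover have "coeff f 0 \<noteq> 0" using 0 \<open>f = [:coeff f 0:]\<close> by (metis pCons_0_0)
  ultimately show ?case by (metis itr.simps(1) poly_pCons mult_zero_right poly_0 add.right_neutral)
next
  case (Suc m)
  have L: "pd (Suc m) (zeta - r m) f \<noteq> 0 \<and> (\<forall>z. poly (pd (Suc m) (zeta - r m) f) z = 0 \<longrightarrow> good s (Qf al be ga z))
     \<and> degree (pd (Suc m) (zeta - r m) f) \<le> Suc m - 1 \<and> (al \<ge> 0 \<or> degree (pd (Suc m) (zeta - r m) f) = Suc m - 1)"
    using Suc.prems by (intro laguerre) auto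
  have "poly (itr zeta r m (pd (Suc m) (zeta - r m) f)) zeta \<noteq> 0"
    using L Suc.prems(4) by (intro Suc.IH) auto
  then show ?case by simp
qed



lemma pderiv_phi_Suc: "pderiv (phi (Suc k)) = phi k"
proof -
  have "(of_nat (Suc k) :: complex) * (1 / of_nat (fact (Suc k))) = 1 / of_nat (fact k)"
    by (simp only: fact_Suc of_nat_mult) (simp del: of_nat_Suc add: divide_simps)
  then show ?thesis unfolding phi_def pderiv_monom by simp
qed

lemma pderiv_phi_0: "pderiv (phi 0) = 0"
  unfolding phi_def pderiv_monom by simp

lemma pderiv_funpow_phi: "(pderiv ^^ j) (phi d) = (if j \<le> d then phi (d - j) else 0)"
proof (induction j)
  case 0
  then show ?case by simp
next
  case (Suc j)
  show ?case
  proof (cases "Suc j \<le> d")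
    case True
    then have "d - j = Suc (d - Suc j)" by simp
    then show ?thesis using Suc True by (simp add: pderiv_phi_Suc)
  next
    case False
    then show ?thesis using Suc by (auto simp: pderiv_phi_0 pderiv_0 le_Suc_eq)
  qed
qed

lemma coeff_phi: "coeff (phi k) i = (if i = k then 1 / of_nat (fact k) else 0)"
  by (simp add: phi_def coeff_monom)

lemma coeff_Dop_phi:
  assumes "d \<le> n"
  shows "coeff (Dop n a (phi d)) i = (if i \<le> d then a (d - i) / of_nat (fact i) else 0)"
proof -
  have "coeff (Dop n a (phi d)) i = (\<Sum>j\<le>n. if j = d - i then (if i \<le> d then a j / of_nat (fact i) else 0) else 0)"
    unfolding Dop_def coeff_sum
  proof (intro sum.cong refl)
    fix j assume "j \<in> {..n}"
    show "coeff (smult (a j) ((pderiv ^^ j) (phi d))) i =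
      (if j = d - i then (if i \<le> d then a j / of_nat (fact i) else 0) else 0)"
      unfolding pderiv_funpow_phi by (auto simp: coeff_phi)
  qed
  also have "\<dots> = (if i \<le> d then a (d - i) / of_nat (fact i) else 0)"
    using assms by (subst sum.delta) auto
  finally show ?thesis .
qed

lemma Dop_0: "Dop n a 0 = 0"
  by (simp add: Dop_def pderiv_funpow_0)

lemma poly_Dop: "degree f \<le> n \<Longrightarrow>
   poly (Dop n a f) z = (\<Sum>j\<le>degree f. a j * poly ((pderiv ^^ j) f) z)"
proof -
  assume d: "degree f \<le> n"
  have "poly (Dop n a f) z = (\<Sum>j\<le>n. a j * poly ((pderiv ^^ j) f) z)"
    by (simp add: Dop_def poly_sum)
  also have "\<dots> = (\<Sum>j\<le>degree f. a j * poly ((pderiv ^^ j) f) z)"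
    using d by (intro sum.mono_neutral_right) (auto simp: pderiv_funpow_high)
  finally show ?thesis .
qed

lemma pair_Dop:
  assumes d: "degree f = d" "d \<le> n"
  shows "pair d (Dop n a (phi d)) f z = poly (Dop n a f) z"
proof -
  define g where "g = (\<lambda>i. a i * poly ((pderiv ^^ i) f) z)"
  have "pair d (Dop n a (phi d)) f z = (\<Sum>j\<le>d. g (d - j))"
    unfolding pair_def g_def
    by (intro sum.cong refl) (auto simp: coeff_Dop_phi[OF d(2)])
  also have "\<dots> = (\<Sum>j<Suc d. g (Suc d - Suc j))"
    by (simp add: lessThan_Suc_atMost)
  also have "\<dots> = (\<Sum>j<Suc d. g j)" by (rule sum.nat_diff_reindex)
  also have "\<dots> = poly (Dop n a f) z"
    using poly_Dop[of f n a z] d by (simp add: g_def lessThan_Suc_atMost)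
  finally show ?thesis .
qed

lemma circ_form:
  assumes "circular_domain \<Omega>"
  shows "\<exists>al be ga s. \<Omega> = {z. good s (Qf al be ga z)}"
proof -
  have dist_sq: "dist c z ^ 2 = cmod z ^ 2 - Re (2 * cnj c * z) + cmod c ^ 2" for c z :: complex
    unfolding dist_norm by (simp add: normsq_diff)
  have le: "(dist c z \<le> r) = (0 \<le> r^2 - dist c z ^ 2)" if "r > 0" for c z and r :: real
    using abs_le_square_iff[of "dist c z" r] that by simp
  have lt: "(dist c z < r) = (0 < r^2 - dist c z ^ 2)" if "r > 0" for c z and r :: real
  proof -
    have "(r \<le> dist c z) = (r^2 \<le> dist c z ^ 2)"
      using abs_le_square_iff[of r "dist c z"] that by simp
    then show ?thesis by linarith
  qed
  have gt: "(\<not> dist c z \<le> r) = (0 < dist c z ^ 2 - r^2)" if "r > 0" for c z and r :: real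
    using le[OF that, of c z] by (simp add: not_le)
  have ge: "(\<not> dist c z < r) = (0 \<le> dist c z ^ 2 - r^2)" if "r > 0" for c z and r :: real
    using lt[OF that, of c z] by (simp add: not_less)
  from assms show ?thesis unfolding circular_domain_def
  proof (elim disjE exE conjE)
    fix c r assume r: "(0::real) < r" and "\<Omega> = ball c r"
    have "\<Omega> = {z. good True (Qf (-1) (2 * cnj c) (r^2 - cmod c ^ 2) z)}"
    proof (rule set_eqI)
      fix z
      have "good True (Qf (-1) (2 * cnj c) (r^2 - cmod c ^ 2) z) = (0 < r^2 - dist c z ^ 2)"
        unfolding good_def Qf_def dist_sq by (simp; linarith)
      then show "z \<in> \<Omega> \<longleftrightarrow> z \<in> {z. good True (Qf (-1) (2 * cnj c) (r^2 - cmod c ^ 2) z)}"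
        using lt[OF r, of c z] \<open>\<Omega> = ball c r\<close> by simp
    qed
    then show ?thesis by blast
  next
    fix c r assume r: "(0::real) < r" and "\<Omega> = cball c r"
    have "\<Omega> = {z. good False (Qf (-1) (2 * cnj c) (r^2 - cmod c ^ 2) z)}"
    proof (rule set_eqI)
      fix z
      have "good False (Qf (-1) (2 * cnj c) (r^2 - cmod c ^ 2) z) = (0 \<le> r^2 - dist c z ^ 2)"
        unfolding good_def Qf_def dist_sq by (simp; linarith)
      then show "z \<in> \<Omega> \<longleftrightarrow> z \<in> {z. good False (Qf (-1) (2 * cnj c) (r^2 - cmod c ^ 2) z)}"
        using le[OF r, of c z] \<open>\<Omega> = cball c r\<close> by simp
    qed
    then show ?thesis by blast
  next
    fix c r assume r: "(0::real) < r" and "\<Omega> = - cball c r"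
    have "\<Omega> = {z. good True (Qf 1 (- 2 * cnj c) (cmod c ^ 2 - r^2) z)}"
    proof (rule set_eqI)
      fix z
      have "good True (Qf 1 (- 2 * cnj c) (cmod c ^ 2 - r^2) z) = (0 < dist c z ^ 2 - r^2)"
        unfolding good_def Qf_def dist_sq by (simp; linarith)
      then show "z \<in> \<Omega> \<longleftrightarrow> z \<in> {z. good True (Qf 1 (- 2 * cnj c) (cmod c ^ 2 - r^2) z)}"
        using gt[OF r, of c z] \<open>\<Omega> = - cball c r\<close> by simp
    qed
    then show ?thesis by blast
  next
    fix c r assume r: "(0::real) < r" and "\<Omega> = - ball c r"
    have "\<Omega> = {z. good False (Qf 1 (- 2 * cnj c) (cmod c ^ 2 - r^2) z)}"
    proof (rule set_eqI)
      fix z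
      have "good False (Qf 1 (- 2 * cnj c) (cmod c ^ 2 - r^2) z) = (0 \<le> dist c z ^ 2 - r^2)"
        unfolding good_def Qf_def dist_sq by (simp; linarith)
      then show "z \<in> \<Omega> \<longleftrightarrow> z \<in> {z. good False (Qf 1 (- 2 * cnj c) (cmod c ^ 2 - r^2) z)}"
        using ge[OF r, of c z] \<open>\<Omega> = - ball c r\<close> by simp
    qed
    then show ?thesis by blast
  next
    fix a :: complex and b :: real assume "\<Omega> = {z. b < Re (cnj a * z)}"
    then have "\<Omega> = {z. good True (Qf 0 (cnj a) (- b) z)}"
      by (auto simp: good_def Qf_def)
    then show ?thesis by blast
  next
    fix a :: complex and b :: real assume "\<Omega> = {z. b \<le> Re (cnj a * z)}"
    then have "\<Omega> = {z. good False (Qf 0 (cnj a) (- b) z)}"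
      by (auto simp: good_def Qf_def)
    then show ?thesis by blast
  qed
qed



lemma Dop_1: "Dop n a 1 = [:a 0:]"
proof -
  have "Dop n a 1 = (\<Sum>j\<in>{0}. smult (a j) ((pderiv ^^ j) 1))"
    unfolding Dop_def
    by (intro sum.mono_neutral_right) (auto simp: pderiv_funpow_high)
  then show ?thesis by simp
qed

theorem mainTheorem7:
  fixes n :: nat and a :: "nat \<Rightarrow> complex" and f :: "complex poly" and \<Omega> :: "complex set"
  assumes "n \<ge> 1"
    and "bij_betw (Dop n a) (Pn n) (Pn n)"
    and "f \<in> Pn n" and "f \<noteq> 0"
    and "circular_domain \<Omega>"
    and "\<forall>k\<in>{1..n}. Zs (Dop n a (phi k)) \<subseteq> \<Omega>"
  shows "Zs (Dop n a f) \<subseteq> setsum_plus (Zs f) \<Omega>"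
proof
  fix zeta assume zr: "zeta \<in> Zs (Dop n a f)"
  show "zeta \<in> setsum_plus (Zs f) \<Omega>"
  proof (rule ccontr)
    assume nz: "zeta \<notin> setsum_plus (Zs f) \<Omega>"
    have fK: "zeta - u \<notin> \<Omega>" if "poly f u = 0" for u
    proof
      assume "zeta - u \<in> \<Omega>"
      then have "zeta \<in> setsum_plus (Zs f) \<Omega>"
        unfolding setsum_plus_def Zs_def using that by (intro CollectI exI[of _ u] exI[of _ "zeta - u"]) auto
      then show False using nz by simp
    qed
    define d where "d = degree f"
    have dn: "d \<le> n" using assms(3) by (simp add: Pn_def d_def)
    have inj: "inj_on (Dop n a) (Pn n)" using assms(2) by (rule bij_betw_imp_inj_on)
    have a0: "a 0 \<noteq> 0"
    proof
      assume "a 0 = 0"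
      then have "Dop n a 1 = Dop n a 0" by (simp add: Dop_1 Dop_0)
      moreover have "(1::complex poly) \<in> Pn n" "(0::complex poly) \<in> Pn n" by (auto simp: Pn_def)
      ultimately have "(1::complex poly) = 0" using inj by (meson inj_onD)
      then show False by simp
    qed
    define H where "H = Dop n a (phi d)"
    have cH: "coeff H i = (if i \<le> d then a (d - i) / of_nat (fact i) else 0)" for i
      unfolding H_def by (rule coeff_Dop_phi[OF dn])
    have cHd: "coeff H d \<noteq> 0" using a0 cH[of d] by simp
    have dH: "degree H = d"
    proof (rule antisym)
      show "degree H \<le> d" by (rule degree_le) (auto simp: cH)
      show "d \<le> degree H" using cHd by (rule le_degree)
    qed
    have lH: "lead_coeff H \<noteq> 0" using cHd dH by simp
    obtain r where Hr: "smult (lead_coeff H) (\<Prod>i<degree H. [:-r i, 1:]) = H"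
      using complex_poly_decompose' by blast
    have rO: "r i \<in> \<Omega>" if "i < d" for i
    proof -
      have "poly H (r i) = 0" using that dH by (subst Hr[symmetric]) (auto simp: poly_prod)
      moreover have "d \<in> {1..n}" using that dn by auto
      ultimately show ?thesis using assms(6) unfolding H_def Zs_def by blast
    qed
    have "poly (Dop n a f) zeta = pair d H f zeta"
      unfolding H_def by (rule pair_Dop[symmetric]) (use dn in \<open>auto simp: d_def\<close>)
    also have "\<dots> = lead_coeff H * pair d (\<Prod>i<d. [:-r i, 1:]) f zeta"
      using Hr dH pair_smult by metis
    also have "\<dots> = lead_coeff H * poly (itr zeta r d f) zeta"
      by (simp add: pair_prod d_def)
    finally have eqp: "poly (Dop n a f) zeta = lead_coeff H * poly (itr zeta r d f) zeta" .
    obtain al be ga s where Om: "\<Omega> = {z. good s (Qf al be ga z)}"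
      using circ_form[OF assms(5)] by blast
    define al' where "al' = - al"
    define be' where "be' = 2 * of_real al * cnj zeta + be"
    define ga' where "ga' = - Qf al be ga zeta"
    have K: "(zeta - u \<notin> \<Omega>) = good (\<not> s) (Qf al' be' ga' u)" for u
      unfolding Om al'_def be'_def ga'_def using not_good[of s "Qf al be ga (zeta - u)"] Qf_reflect[of al be ga zeta u]
      by simp
    have "poly (itr zeta r d f) zeta \<noteq> 0"
    proof (rule laguerre_iter)
      show "f \<noteq> 0" by fact
      show "degree f \<le> d" by (simp add: d_def)
      show "\<forall>z. poly f z = 0 \<longrightarrow> good (\<not> s) (Qf al' be' ga' z)" using fK K by blast
      show "\<forall>i<d. \<not> good (\<not> s) (Qf al' be' ga' (zeta - r i))"
        using rO K[of "zeta - r _"] by auto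
      show "al' \<ge> 0 \<or> degree f = d" by (simp add: d_def)
    qed
    then have "poly (Dop n a f) zeta \<noteq> 0" using eqp lH by simp
    then show False using zr by (simp add: Zs_def)
  qed
qed

end
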